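(* In the setting of the context, $b(\mathrm{Im}\,d_1^* )\subseteq J^k_o(X)$ and $b(\mathrm{Im}\,d_1^* )\subseteq\ker\Omega$, where $d_1^*:J^{k-2}(D;\mathbb{R}/\mathbb{Z})\to J^{k-1}(X;\mathbb{R}/\mathbb{Z})$ is the Mayer–Vietoris connecting map.
   Context: Let $J^*$ be a $\mathbb{Z}$-graded generalized cohomology theory on smooth manifolds (with corners) such that $J^k(\mathrm{pt})$ is finitely generated for every $k$; write $J^k(M;\mathbb{Z})=J^k(M)$, and $J^k(M;\mathbb{R}/\mathbb{Z})$ for the theory with $\mathbb{R}/\mathbb{Z}$ coefficients. For $F=\mathbb{Q},\mathbb{R}$ set $\mathbf H^k(M;F)=\bigoplus_{j\ge0}H^j(M;J^{k-j}(\mathrm{pt})\otimes F)$, and $\mathbf\Lambda^k(M)=\bigoplus_{j\ge0}\Omega^j(M;J^{k-j}(\mathrm{pt})\otimes\mathbb{R})$ (smooth forms), exterior derivative $d$. $ch:J^k(M;\mathbb{Z})\to\mathbf H^k(M;\mathbb{Q})$ is the canonical (Chern character) map, $i_\mathbb{R}$ the coefficient map, and $\mathbf\Lambda^k_J(M)$ the closed forms whose de Rham class lies in $i_\mathbb{R}(ch(J^k(M;\mathbb{Z})))$. $p:\mathbf H^{k-1}(M;\mathbb{R})\to J^{k-1}(M;\mathbb{R}/\mathbb{Z})$ is induced by $\mathbb{R}\to\mathbb{R}/\mathbb{Z}$ and $b:J^{k-1}(M;\mathbb{R}/\mathbb{Z})\to J^k(M;\mathbb{Z})$ is the Bockstein.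 $\hat J^k$ is a differential cohomology functor associated to $J$: a functor from smooth manifolds with corners to abelian groups with natural transformations $i_1:J^{k-1}(\cdot;\mathbb{R}/\mathbb{Z})\to\hat J^k$, $i_2:\mathbf\Lambda^{k-1}/\mathbf\Lambda^{k-1}_J\to\hat J^k$, $\delta_1:\hat J^k\to\mathbf\Lambda^k_J$, $\delta_2:\hat J^k\to J^k(\cdot;\mathbb{Z})$ with $0\to J^{k-1}(\mathbb{R}/\mathbb{Z})\xrightarrow{i_1}\hat J^k\xrightarrow{\delta_1}\mathbf\Lambda^k_J\to0$ and $0\to\mathbf\Lambda^{k-1}/\mathbf\Lambda^{k-1}_J\xrightarrow{i_2}\hat J^k\xrightarrow{\delta_2}J^k(\mathbb{Z})\to0$ exact, $\delta_2 i_1=b$, $\delta_1 i_2=d$, $i_1\circ p=i_2\circ\mathrm{deRh}$, and $\mathrm{deRh}\circ\delta_1=i_\mathbb{R}\circ ch\circ\delta_2$. Geometric setting: $X$ compact smooth manifold, $X=A\cup B$, $A,B$ compact codimension-$0$ submanifolds, $D=A\cap B$ codimension-$0$ with collar neighborhoods in $A$ and $B$; the Mayer–Vietoris sequences of $J(\cdot;\mathbb{R}/\mathbb{Z})$ and $J(\cdot;\mathbb{Z})$ for this decomposition are exact and commute up to sign with $b$. $J^k_o(X)=\{v\in J^k(X;\mathbb{Z}): v|_A=0=v|_B\}$. Definition of $\Omega$: for $v\in J^k_o(X)$ choose $h\in\hat J^k(X)$ with $\delta_2(h)=v$; then $h|_A=i_2(\{\gamma_A\})$, $h|_B=i_2(\{\gamma_B\})$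 for forms $\gamma_A,\gamma_B$ (braces denote classes mod $\mathbf\Lambda^{k-1}_J$), with $\gamma_A|_D-\gamma_B|_D\in\mathbf\Lambda^{k-1}_J(D)$; $\Omega(v)$ is its class in $\mathbf\Lambda^{k-1}_J(D)/(\mathbf\Lambda^{k-1}_J(A)|_D+\mathbf\Lambda^{k-1}_J(B)|_D)$ (independent of choices; $\Omega$ is a homomorphism). *)

theory Defs
  imports Main
begin

text \<open>
Abstract (diagrammatic) rendering of the differential-cohomology setting for the
decomposition X = A \<union> B, D = A \<inter> B.  Carriers (all abelian groups):
  'rx, 'ra, 'rb : J^(k-1)(X;R/Z), J^(k-1)(A;R/Z), J^(k-1)(B;R/Z)
  'rd           : J^(k-2)(D;R/Z)
  'zx, 'za, 'zb : J^k(X;Z), J^k(A;Z), J^k(B;Z)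
  'hx, 'ha, 'hb : hat J^k(X), hat J^k(A), hat J^k(B)
  'fx, 'fa, 'fb, 'fd : Lambda^(k-1)(X), Lambda^(k-1)(A), Lambda^(k-1)(B), Lambda^(k-1)(D)
The quotient Lambda^(k-1)/Lambda^(k-1)_J is encoded by letting i2 be defined on
forms with kernel exactly Lambda^(k-1)_J.
\<close>

definition additive :: "('a::ab_group_add \<Rightarrow> 'b::ab_group_add) \<Rightarrow> bool" where
  "additive f \<longleftrightarrow> (\<forall>x y. f (x + y) = f x + f y)"

locale mv_diff_setting =
  fixes rRA :: "'rx::ab_group_add \<Rightarrow> 'ra::ab_group_add"
    and rRB :: "'rx \<Rightarrow> 'rb::ab_group_add"
    and d1 :: "'rd::ab_group_add \<Rightarrow> 'rx"
    and rZA :: "'zx::ab_group_add \<Rightarrow> 'za::ab_group_add"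
    and rZB :: "'zx \<Rightarrow> 'zb::ab_group_add"
    and bX :: "'rx \<Rightarrow> 'zx" and bA :: "'ra \<Rightarrow> 'za" and bB :: "'rb \<Rightarrow> 'zb"
    and rHA :: "'hx::ab_group_add \<Rightarrow> 'ha::ab_group_add"
    and rHB :: "'hx \<Rightarrow> 'hb::ab_group_add"
    and i1X :: "'rx \<Rightarrow> 'hx" and i1A :: "'ra \<Rightarrow> 'ha" and i1B :: "'rb \<Rightarrow> 'hb"
    and d2X :: "'hx \<Rightarrow> 'zx" and d2A :: "'ha \<Rightarrow> 'za" and d2B :: "'hb \<Rightarrow> 'zb"
    and i2X :: "'fx::ab_group_add \<Rightarrow> 'hx" and i2A :: "'fa::ab_group_add \<Rightarrow> 'ha"
    and i2B :: "'fb::ab_group_add \<Rightarrow> 'hb"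
    and rFA :: "'fx \<Rightarrow> 'fa" and rFB :: "'fx \<Rightarrow> 'fb"
    and rAD :: "'fa \<Rightarrow> 'fd::ab_group_add" and rBD :: "'fb \<Rightarrow> 'fd"
    and LJX :: "'fx set" and LJA :: "'fa set" and LJB :: "'fb set"
  assumes add: "additive rRA" "additive rRB" "additive d1" "additive rZA" "additive rZB"
      "additive bX" "additive bA" "additive bB" "additive rHA" "additive rHB"
      "additive i1X" "additive i1A" "additive i1B" "additive d2X" "additive d2A" "additive d2B"
      "additive i2X" "additive i2A" "additive i2B" "additive rFA" "additive rFB"
      "additive rAD" "additive rBD"
    and mv_exact: "\<And>x. (rRA x = 0 \<and> rRB x = 0) \<longleftrightarrow> x \<in> range d1"
    and b_nat_A: "\<And>x. rZA (bX x) = bA (rRA x)"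
    and b_nat_B: "\<And>x. rZB (bX x) = bB (rRB x)"
    and i1_nat_A: "\<And>x. rHA (i1X x) = i1A (rRA x)"
    and i1_nat_B: "\<And>x. rHB (i1X x) = i1B (rRB x)"
    and i2_nat_A: "\<And>f. rHA (i2X f) = i2A (rFA f)"
    and i2_nat_B: "\<And>f. rHB (i2X f) = i2B (rFB f)"
    and d2_nat_A: "\<And>h. rZA (d2X h) = d2A (rHA h)"
    and d2_nat_B: "\<And>h. rZB (d2X h) = d2B (rHB h)"
    and d2i1_X: "\<And>x. d2X (i1X x) = bX x"
    and d2i1_A: "\<And>x. d2A (i1A x) = bA x"
    and d2i1_B: "\<And>x. d2B (i1B x) = bB x"
    \<comment> \<open>exactness of 0 \<rightarrow> Lambda/Lambda_J \<rightarrow> hat J \<rightarrow> J(Z) \<rightarrow> 0 on X, A, B\<close>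
    and i2_ker_X: "\<And>f. i2X f = 0 \<longleftrightarrow> f \<in> LJX"
    and i2_ker_A: "\<And>f. i2A f = 0 \<longleftrightarrow> f \<in> LJA"
    and i2_ker_B: "\<And>f. i2B f = 0 \<longleftrightarrow> f \<in> LJB"
    and d2_ker_X: "\<And>h. d2X h = 0 \<longleftrightarrow> h \<in> range i2X"
    and d2_ker_A: "\<And>h. d2A h = 0 \<longleftrightarrow> h \<in> range i2A"
    and d2_ker_B: "\<And>h. d2B h = 0 \<longleftrightarrow> h \<in> range i2B"
    and d2_surj_X: "surj d2X" and d2_surj_A: "surj d2A" and d2_surj_B: "surj d2B"
    \<comment> \<open>functoriality of restriction of forms: (f|_A)|_D = f|_D = (f|_B)|_D\<close>
    and forms_comm: "\<And>f. rAD (rFA f) = rBD (rFB f)"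

definition J_o :: "('zx \<Rightarrow> 'za::zero) \<Rightarrow> ('zx \<Rightarrow> 'zb::zero) \<Rightarrow> 'zx set" where
  "J_o rZA rZB = {v. rZA v = 0 \<and> rZB v = 0}"

text \<open>w is a representative form of Omega(v): gamma_A|_D - gamma_B|_D for some choice of
  h with delta2 h = v and h|_A = i2(gamma_A), h|_B = i2(gamma_B).\<close>
definition Omega_rep ::
  "('hx \<Rightarrow> 'zx) \<Rightarrow> ('hx \<Rightarrow> 'ha) \<Rightarrow> ('hx \<Rightarrow> 'hb) \<Rightarrow> ('fa \<Rightarrow> 'ha) \<Rightarrow> ('fb \<Rightarrow> 'hb)
   \<Rightarrow> ('fa \<Rightarrow> 'fd::ab_group_add) \<Rightarrow> ('fb \<Rightarrow> 'fd) \<Rightarrow> 'zx \<Rightarrow> 'fd \<Rightarrow> bool" where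
  "Omega_rep d2X rHA rHB i2A i2B rAD rBD v w \<longleftrightarrow>
     (\<exists>h gA gB. d2X h = v \<and> rHA h = i2A gA \<and> rHB h = i2B gB \<and> w = rAD gA - rBD gB)"

definition restr_sum :: "('fa \<Rightarrow> 'fd::plus) \<Rightarrow> ('fb \<Rightarrow> 'fd) \<Rightarrow> 'fa set \<Rightarrow> 'fb set \<Rightarrow> 'fd set" where
  "restr_sum rAD rBD LJA LJB = {rAD a + rBD b | a b. a \<in> LJA \<and> b \<in> LJB}"

text \<open>ker Omega: v \<in> J_o(X), Omega(v) has a representative, and every representative lies in
  Lambda_J(A)|_D + Lambda_J(B)|_D (i.e. the class Omega(v) is zero).\<close>
definition Omega_ker ::
  "('zx \<Rightarrow> 'za::zero) \<Rightarrow> ('zx \<Rightarrow> 'zb::zero) \<Rightarrow> ('hx \<Rightarrow> 'zx) \<Rightarrow> ('hx \<Rightarrow> 'ha) \<Rightarrow> ('hx \<Rightarrow> 'hb)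
   \<Rightarrow> ('fa \<Rightarrow> 'ha) \<Rightarrow> ('fb \<Rightarrow> 'hb) \<Rightarrow> ('fa \<Rightarrow> 'fd::ab_group_add) \<Rightarrow> ('fb \<Rightarrow> 'fd)
   \<Rightarrow> 'fa set \<Rightarrow> 'fb set \<Rightarrow> 'zx set" where
  "Omega_ker rZA rZB d2X rHA rHB i2A i2B rAD rBD LJA LJB =
     {v \<in> J_o rZA rZB. (\<exists>w. Omega_rep d2X rHA rHB i2A i2B rAD rBD v w) \<and>
        (\<forall>w. Omega_rep d2X rHA rHB i2A i2B rAD rBD v w \<longrightarrow> w \<in> restr_sum rAD rBD LJA LJB)}"

end

theory Submission
  imports Defs
begin

lemma add0: "additive f \<Longrightarrow> f 0 = 0"
  unfolding additive_def by (metis add_cancel_right_right add_0)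

lemma adddiff: "additive f \<Longrightarrow> f (x - y) = f x - f y"
  unfolding additive_def by (metis add_diff_cancel eq_diff_eq)

lemma addneg: "additive f \<Longrightarrow> f (- x) = - f x"
  using adddiff[of f 0 x] add0[of f] by simp

lemma addplus: "additive f \<Longrightarrow> f (x + y) = f x + f y"
  unfolding additive_def by blast

theorem lemma4:
  assumes "mv_diff_setting rRA rRB d1 rZA rZB bX bA bB rHA rHB i1X i1A i1B d2X d2A d2B
             i2X i2A i2B rFA rFB rAD rBD LJX LJA LJB"
  shows "bX ` range d1 \<subseteq> J_o rZA rZB \<and>
         bX ` range d1 \<subseteq> Omega_ker rZA rZB d2X rHA rHB i2A i2B rAD rBD LJA LJB"
proof -
  interpret M: mv_diff_setting rRA rRB d1 rZA rZB bX bA bB rHA rHB i1X i1A i1B d2X d2A d2B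
             i2X i2A i2B rFA rFB rAD rBD LJX LJA LJB by (rule assms)
  have J: "bX (d1 y) \<in> J_o rZA rZB" for y
  proof -
    have "rRA (d1 y) = 0" "rRB (d1 y) = 0" using M.mv_exact by blast+
    thus ?thesis unfolding J_o_def using M.b_nat_A M.b_nat_B add0[OF M.add(7)] add0[OF M.add(8)] by simp
  qed
  have K: "bX (d1 y) \<in> Omega_ker rZA rZB d2X rHA rHB i2A i2B rAD rBD LJA LJB" for y
  proof -
    have z: "rRA (d1 y) = 0" "rRB (d1 y) = 0" using M.mv_exact by blast+
    have hA: "rHA (i1X (d1 y)) = 0" using M.i1_nat_A z add0[OF M.add(12)] by simp
    have hB: "rHB (i1X (d1 y)) = 0" using M.i1_nat_B z add0[OF M.add(13)] by simp
    have ex: "Omega_rep d2X rHA rHB i2A i2B rAD rBD (bX (d1 y)) 0"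
      unfolding Omega_rep_def
      apply (rule exI[of _ "i1X (d1 y)"], rule exI[of _ 0], rule exI[of _ 0])
      using hA hB M.d2i1_X add0[OF M.add(18)] add0[OF M.add(19)] add0[OF M.add(22)] add0[OF M.add(23)] by simp
    have all: "w \<in> restr_sum rAD rBD LJA LJB"
      if rep: "Omega_rep d2X rHA rHB i2A i2B rAD rBD (bX (d1 y)) w" for w
    proof -
      obtain h gA gB where h: "d2X h = bX (d1 y)" "rHA h = i2A gA" "rHB h = i2B gB"
        "w = rAD gA - rBD gB" using rep unfolding Omega_rep_def by blast
      have "d2X (h - i1X (d1 y)) = 0" using h(1) M.d2i1_X adddiff[OF M.add(14)] by simp
      then obtain f where f: "h - i1X (d1 y) = i2X f" using M.d2_ker_X by blast
      have hf: "h = i1X (d1 y) + i2X f" using f by (simp add: algebra_simps)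
      have eA: "i2A gA = i2A (rFA f)" using h(2) hf hA M.i2_nat_A addplus[OF M.add(9)] by simp
      have eB: "i2B gB = i2B (rFB f)" using h(3) hf hB M.i2_nat_B addplus[OF M.add(10)] by simp
      have a: "gA - rFA f \<in> LJA" using eA M.i2_ker_A[symmetric] adddiff[OF M.add(18)] by simp
      have b: "- (gB - rFB f) \<in> LJB" using eB M.i2_ker_B[symmetric] adddiff[OF M.add(19)] addneg[OF M.add(19)] by simp
      have "w = rAD (gA - rFA f) + rBD (- (gB - rFB f))"
        using h(4) adddiff[OF M.add(22)] adddiff[OF M.add(23)] addneg[OF M.add(23)] M.forms_comm[of f] by simp
      thus ?thesis unfolding restr_sum_def using a b by blast
    qed
    show ?thesis unfolding Omega_ker_def using J ex all by blast
  qed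
  show ?thesis using J K by blast
qed

end
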